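(* For every $r_0\in(0,1)$ there exists $\gamma>0$ such that for all $\delta\in(0,1/10)$ and all $0<\alpha<r\le1$, and all $z$ with $$|z|\le\gamma\,\delta\, r\,\frac{\log(e/r)}{\log(e/\alpha)},$$ one has $d_{B(0,r_0)\setminus\{r\}}(0,z)\le\frac{\delta}{2\log(e/\alpha)}$.
   Context: $d_W$ denotes the hyperbolic distance in a hyperbolic domain $W$, normalized to have curvature $-1$ (on $\mathbb D$ the density is $2|dz|/(1-|z|^2)$). $B(0,r_0)$ is the open disk of radius $r_0$ centered at $0$ (if $r\ge r_0$, $B(0,r_0)\setminus\{r\}=B(0,r_0)$). *)

theory Defs
  imports "HOL-Complex_Analysis.Complex_Analysis"
begin

text \<open>Hyperbolic distance on the unit disk, curvature -1 (density 2|dz|/(1-|z|^2)):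
  d(a,b) = 2 artanh (|a - b| / |1 - conj a * b|).\<close>
definition disk_hyp_dist :: "complex \<Rightarrow> complex \<Rightarrow> real" where
  "disk_hyp_dist a b = 2 * artanh (cmod (a - b) / cmod (1 - cnj a * b))"

definition hyp_dist :: "complex set \<Rightarrow> complex \<Rightarrow> complex \<Rightarrow> real" where
  "hyp_dist W z w = Inf {disk_hyp_dist a b | a b p.
      p holomorphic_on ball 0 1 \<and> covering_space (ball 0 1) p W \<and>
      a \<in> ball 0 1 \<and> b \<in> ball 0 1 \<and> p a = z \<and> p b = w}"

end

theory Submission
  imports Defs
begin



lemma covering_space_restrict:
  assumes cov: "covering_space C p S" and T: "openin (top_of_set S) T"
  shows "covering_space (C \<inter> p -` T) p T"
proof
  show "continuous_on (C \<inter> p -` T) p"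
    using cov covering_space_imp_continuous continuous_on_subset by blast
  have TS: "T \<subseteq> S" using T openin_subset by fastforce
  show "p ` (C \<inter> p -` T) = T"
    using cov covering_space_imp_surjective TS by blast
  fix x assume "x \<in> T"
  then have "x \<in> S" using TS by blast
  then obtain U v where xU: "x \<in> U" and U: "openin (top_of_set S) U"
    and v: "\<Union>v = C \<inter> p -` U" "\<forall>u\<in>v. openin (top_of_set C) u" "pairwise disjnt v"
       "\<forall>u\<in>v. \<exists>q. homeomorphism u U p q"
    using cov unfolding covering_space_def by metis
  show "\<exists>U'. x \<in> U' \<and> openin (top_of_set T) U' \<and>
          (\<exists>v'. \<Union>v' = (C \<inter> p -` T) \<inter> p -` U' \<and> (\<forall>u\<in>v'. openin (top_of_set (C \<inter> p -` T)) u) \<and>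
           pairwise disjnt v' \<and> (\<forall>u\<in>v'. \<exists>q. homeomorphism u U' p q))"
  proof (intro exI[where x="U \<inter> T"] exI[where x="(\<lambda>u. u \<inter> p -` T) ` v"] conjI ballI)
    show "x \<in> U \<inter> T" using xU \<open>x \<in> T\<close> by blast
    obtain G where G: "open G" "U = S \<inter> G" using U openin_open by blast
    then have "U \<inter> T = T \<inter> G" using TS by blast
    then show "openin (top_of_set T) (U \<inter> T)" using G by (simp add: openin_open_Int)
    show "\<Union>((\<lambda>u. u \<inter> p -` T) ` v) = (C \<inter> p -` T) \<inter> p -` (U \<inter> T)"
      using v(1) by blast
    show "pairwise disjnt ((\<lambda>u. u \<inter> p -` T) ` v)"
      using v(3) unfolding pairwise_def disjnt_def by blast
  next
    fix u' assume "u' \<in> (\<lambda>u. u \<inter> p -` T) ` v"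
    then obtain u where u: "u \<in> v" "u' = u \<inter> p -` T" by blast
    obtain G where G: "open G" "u = C \<inter> G" using v(2) u openin_open by blast
    then have "u' = (C \<inter> p -` T) \<inter> G" using u by blast
    then show "openin (top_of_set (C \<inter> p -` T)) u'" using G by (simp add: openin_open_Int)
    obtain q where q: "homeomorphism u U p q" using v(4) u by blast
    have "p ` u' = U \<inter> T"
      using homeomorphism_image1[OF q] u by blast
    then show "\<exists>q. homeomorphism u' (U \<inter> T) p q"
      using homeomorphism_of_subsets[OF q, of u' "U \<inter> T"] u by blast
  qed
qed



lemma covering_space_compose_homeo:
  assumes cov: "covering_space C p S" and h: "homeomorphism C' C h h'"
  shows "covering_space C' (p \<circ> h) S"
proof
  have hC: "h ` C' = C" using h homeomorphism_image1 by blast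
  show "continuous_on C' (p \<circ> h)"
  proof (rule continuous_on_compose)
    show "continuous_on C' h" using h unfolding homeomorphism_def by blast
    show "continuous_on (h ` C') p" using hC cov covering_space_imp_continuous by simp
  qed
  show "(p \<circ> h) ` C' = S"
    using cov covering_space_imp_surjective hC by (metis image_comp)
  fix x assume "x \<in> S"
  then obtain U v where xU: "x \<in> U" and U: "openin (top_of_set S) U"
    and v: "\<Union>v = C \<inter> p -` U" "\<forall>u\<in>v. openin (top_of_set C) u" "pairwise disjnt v"
       "\<forall>u\<in>v. \<exists>q. homeomorphism u U p q"
    using cov unfolding covering_space_def by metis
  have h': "homeomorphism C C' h' h" using h homeomorphism_sym by blast
  have hh1: "\<And>x. x \<in> C' \<Longrightarrow> h x \<in> C \<and> h' (h x) = x"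
    using h unfolding homeomorphism_def by blast
  have hh2: "\<And>y. y \<in> C \<Longrightarrow> h' y \<in> C' \<and> h (h' y) = y"
    using h unfolding homeomorphism_def by blast
  show "\<exists>U'. x \<in> U' \<and> openin (top_of_set S) U' \<and>
          (\<exists>v'. \<Union>v' = C' \<inter> (p \<circ> h) -` U' \<and> (\<forall>u\<in>v'. openin (top_of_set C') u) \<and>
           pairwise disjnt v' \<and> (\<forall>u\<in>v'. \<exists>q. homeomorphism u U' (p \<circ> h) q))"
  proof (intro exI[where x="U"] exI[where x="(\<lambda>u. h' ` u) ` v"] conjI ballI)
    show "x \<in> U" "openin (top_of_set S) U" by fact+
    show "\<Union>((\<lambda>u. h' ` u) ` v) = C' \<inter> (p \<circ> h) -` U"
    proof -
      have "\<Union>((\<lambda>u. h' ` u) ` v) = h' ` (C \<inter> p -` U)" using v(1) by blast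
      also have "\<dots> = C' \<inter> (p \<circ> h) -` U"
      proof (rule set_eqI, rule iffI)
        fix x assume "x \<in> h' ` (C \<inter> p -` U)"
        then obtain y where y: "y \<in> C" "p y \<in> U" "x = h' y" by blast
        then show "x \<in> C' \<inter> (p \<circ> h) -` U" using hh2[OF y(1)] by simp
      next
        fix x assume x: "x \<in> C' \<inter> (p \<circ> h) -` U"
        then have "h x \<in> C \<inter> p -` U" "x = h' (h x)" using hh1[of x] by auto
        then show "x \<in> h' ` (C \<inter> p -` U)" by blast
      qed
      finally show ?thesis .
    qed
    show "pairwise disjnt ((\<lambda>u. h' ` u) ` v)"
    proof -
      have sub: "\<forall>u\<in>v. u \<subseteq> C" using v(1) by blast
      have inj: "inj_on h' C" using hh2 by (metis inj_on_inverseI)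
      show ?thesis unfolding pairwise_def disjnt_def
      proof (intro ballI impI)
        fix a b assume "a \<in> (\<lambda>u. h' ` u) ` v" "b \<in> (\<lambda>u. h' ` u) ` v" "a \<noteq> b"
        then obtain ua ub where "ua \<in> v" "ub \<in> v" "a = h' ` ua" "b = h' ` ub" "ua \<noteq> ub" by blast
        moreover have "ua \<inter> ub = {}" using v(3) calculation unfolding pairwise_def disjnt_def by blast
        ultimately show "a \<inter> b = {}" using inj_on_image_Int[OF inj, of ua ub] sub by simp
      qed
    qed
  next
    fix u' assume "u' \<in> (\<lambda>u. h' ` u) ` v"
    then obtain u where u: "u \<in> v" "u' = h' ` u" by blast
    show "openin (top_of_set C') u'"
      using homeomorphism_imp_open_map[OF h'] v(2) u by blast
    obtain q where q: "homeomorphism u U p q" using v(4) u by blast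
    have sub: "u \<subseteq> C" using v(1) u by blast
    have "h ` u' = u"
    proof -
      have "h ` u' = (\<lambda>y. h (h' y)) ` u" using u by (simp add: image_image)
      also have "\<dots> = (\<lambda>y. y) ` u" using sub hh2 by (intro image_cong) auto
      also have "\<dots> = u" by simp
      finally show ?thesis .
    qed
    moreover have "u' \<subseteq> C'" using u sub hh2 by blast
    ultimately have hu: "homeomorphism u' u h h'"
      using homeomorphism_of_subsets[OF h, of u' C u] by blast
    show "\<exists>q. homeomorphism u' U (p \<circ> h) q"
      using homeomorphism_compose[OF hu q] by blast
  qed
qed



lemma covering_space_homeo_compose:
  assumes cov: "covering_space C p S" and k: "homeomorphism S S' k k'"
  shows "covering_space C (k \<circ> p) S'"
proof
  have pC: "p ` C = S" using cov covering_space_imp_surjective by blast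
  show "continuous_on C (k \<circ> p)"
  proof (rule continuous_on_compose)
    show "continuous_on C p" using cov covering_space_imp_continuous by blast
    show "continuous_on (p ` C) k" using pC k unfolding homeomorphism_def by simp
  qed
  show "(k \<circ> p) ` C = S'"
    using pC k homeomorphism_image1 by (metis image_comp)
  fix y assume "y \<in> S'"
  then have x: "k' y \<in> S" "k (k' y) = y" using k unfolding homeomorphism_def by auto
  then obtain U v where xU: "k' y \<in> U" and U: "openin (top_of_set S) U"
    and v: "\<Union>v = C \<inter> p -` U" "\<forall>u\<in>v. openin (top_of_set C) u" "pairwise disjnt v"
       "\<forall>u\<in>v. \<exists>q. homeomorphism u U p q"
    using cov unfolding covering_space_def by metis
  have US: "U \<subseteq> S" using U openin_subset by fastforce
  show "\<exists>U'. y \<in> U' \<and> openin (top_of_set S') U' \<and>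
          (\<exists>v'. \<Union>v' = C \<inter> (k \<circ> p) -` U' \<and> (\<forall>u\<in>v'. openin (top_of_set C) u) \<and>
           pairwise disjnt v' \<and> (\<forall>u\<in>v'. \<exists>q. homeomorphism u U' (k \<circ> p) q))"
  proof (intro exI[where x="k ` U"] exI[where x="v"] conjI ballI)
    show "y \<in> k ` U" using x xU by force
    show "openin (top_of_set S') (k ` U)" using homeomorphism_imp_open_map[OF k U] .
    show "\<Union>v = C \<inter> (k \<circ> p) -` (k ` U)"
    proof -
      have "C \<inter> (k \<circ> p) -` (k ` U) = C \<inter> p -` U"
      proof (rule set_eqI, rule iffI)
        fix c assume "c \<in> C \<inter> (k \<circ> p) -` (k ` U)"
        then have c: "c \<in> C" "(k \<circ> p) c \<in> k ` U" by auto
        then obtain w where w: "w \<in> U" "k (p c) = k w" by auto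
        then have e0: "k' (k (p c)) = k' (k w)" by simp
        have pcS: "p c \<in> S" using c pC by blast
        have kk: "\<And>x. x \<in> S \<Longrightarrow> k' (k x) = x" using k unfolding homeomorphism_def by blast
        have "w \<in> S" using w US by blast
        then have "p c = w" using e0 kk[OF pcS] kk[of w] by simp
        then show "c \<in> C \<inter> p -` U" using w c by simp
      qed auto
      then show ?thesis using v(1) by simp
    qed
    show "pairwise disjnt v" by fact
  next
    fix u assume u: "u \<in> v"
    show "openin (top_of_set C) u" using v(2) u by blast
    obtain q where q: "homeomorphism u U p q" using v(4) u by blast
    have "k ` U \<subseteq> S'" using k US unfolding homeomorphism_def by blast
    then have hk: "homeomorphism U (k ` U) k k'"
      using homeomorphism_of_subsets[OF k US, of "k ` U" "k ` U"] by blast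
    from hk show "\<exists>q. homeomorphism u (k ` U) (k \<circ> p) q"
      using homeomorphism_compose[OF q] by blast
  qed
qed





definition mob :: "real \<Rightarrow> complex \<Rightarrow> complex" where
  "mob c v = (v + of_real c) / (1 + of_real c * v)"

lemma mob_ineq:
  fixes v :: complex and c :: real
  assumes "norm v < 1" "\<bar>c\<bar> < 1"
  shows "norm (v + of_real c) < norm (1 + of_real c * v)"
proof -
  have e1: "(norm (v + of_real c))\<^sup>2 = (Re v + c)\<^sup>2 + (Im v)\<^sup>2" by (simp add: cmod_power2)
  have e2: "(norm (1 + of_real c * v))\<^sup>2 = (1 + c * Re v)\<^sup>2 + (c * Im v)\<^sup>2" by (simp add: cmod_power2)
  have nv: "(Re v)\<^sup>2 + (Im v)\<^sup>2 < 1" using assms(1) cmod_power2[of v]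
    by (metis norm_ge_zero power_less_one_iff power_strict_mono zero_less_numeral one_power2 abs_of_nonneg)
  have c2: "c\<^sup>2 < 1" using assms(2) by (simp add: abs_square_less_1)
  have "(1 + c * Re v)\<^sup>2 + (c * Im v)\<^sup>2 - ((Re v + c)\<^sup>2 + (Im v)\<^sup>2) = (1 - c\<^sup>2) * (1 - ((Re v)\<^sup>2 + (Im v)\<^sup>2))"
    by (simp add: algebra_simps power2_eq_square)
  also have "\<dots> > 0" using nv c2 by simp
  finally have "(norm (v + of_real c))\<^sup>2 < (norm (1 + of_real c * v))\<^sup>2" using e1 e2 by simp
  then show ?thesis by (simp add: power_less_imp_less_base)
qed

lemma mob_den_nz:
  fixes v :: complex and c :: real
  assumes "norm v < 1" "\<bar>c\<bar> < 1"
  shows "1 + of_real c * v \<noteq> 0"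
  using mob_ineq[OF assms] by auto

lemma mob_in_ball:
  fixes v :: complex and c :: real
  assumes "norm v < 1" "\<bar>c\<bar> < 1"
  shows "norm (mob c v) < 1"
  using mob_ineq[OF assms] mob_den_nz[OF assms] by (simp add: mob_def norm_divide divide_less_eq)

lemma mob_inv:
  fixes v :: complex and c :: real
  assumes "norm v < 1" "\<bar>c\<bar> < 1"
  shows "mob (-c) (mob c v) = v"
proof -
  have d: "1 + of_real c * v \<noteq> 0" using mob_den_nz[OF assms] .
  have c2: "1 - (of_real c)\<^sup>2 \<noteq> (0::complex)"
  proof
    assume "1 - (of_real c)\<^sup>2 = (0::complex)"
    then have "(of_real (1 - c\<^sup>2) :: complex) = 0" by simp
    then have "1 - c\<^sup>2 = 0" by (simp only: of_real_eq_0_iff)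
    then show False using assms(2) by (simp add: abs_square_eq_1)
  qed
  have A: "mob c v + of_real (-c) = v * (1 - (of_real c)\<^sup>2) / (1 + of_real c * v)"
    using d by (simp add: mob_def field_simps power2_eq_square)
  have B: "1 + of_real (-c) * mob c v = (1 - (of_real c)\<^sup>2) / (1 + of_real c * v)"
    using d by (simp add: mob_def field_simps power2_eq_square)
  have "mob (-c) (mob c v) = (mob c v + of_real (-c)) / (1 + of_real (-c) * mob c v)"
    by (simp only: mob_def[of "-c"])
  also have "\<dots> = v"
  proof -
    have gen: "\<And>X D::complex. X \<noteq> 0 \<Longrightarrow> D \<noteq> 0 \<Longrightarrow> (v * X / D) / (X / D) = v"
      by (simp add: field_simps)
    show ?thesis unfolding A B by (rule gen[OF c2 d])
  qed
  finally show ?thesis .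
qed

lemma mob_cont: "\<bar>c\<bar> < 1 \<Longrightarrow> continuous_on (ball 0 1) (mob c)"
  unfolding mob_def
  by (intro continuous_intros) (auto dest: mob_den_nz)

lemma mob_homeo:
  assumes "\<bar>c\<bar> < 1"
  shows "homeomorphism (ball 0 1) (ball 0 1) (mob c) (mob (-c))"
proof (rule homeomorphismI)
  have m: "\<bar>-c\<bar> < 1" using assms by simp
  show "continuous_on (ball 0 1) (mob c)" using mob_cont[OF assms] .
  show "continuous_on (ball 0 1) (mob (-c))" using mob_cont[OF m] .
  show "mob c ` ball 0 1 \<subseteq> ball 0 1" using mob_in_ball[OF _ assms] by auto
  show "mob (-c) ` ball 0 1 \<subseteq> ball 0 1" using mob_in_ball[OF _ m] by auto
  show "\<And>x. x \<in> ball 0 1 \<Longrightarrow> mob (-c) (mob c x) = x" using mob_inv[OF _ assms] by auto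
  show "\<And>x. x \<in> ball 0 1 \<Longrightarrow> mob c (mob (-c) x) = x" using mob_inv[OF _ m] by auto
qed

definition cay :: "complex \<Rightarrow> complex" where
  "cay w = (w + 1) / (w - 1)"

lemma cay_Re:
  assumes "norm w < 1"
  shows "Re (cay w) < 0"
proof -
  have w1: "w \<noteq> 1" using assms by auto
  have nv: "(Re w)\<^sup>2 + (Im w)\<^sup>2 < 1" using assms cmod_power2[of w]
    by (metis norm_ge_zero power_less_one_iff power_strict_mono zero_less_numeral one_power2 abs_of_nonneg)
  have den: "(Re (w - 1))\<^sup>2 + (Im (w - 1))\<^sup>2 > 0"
    using w1 by (metis complex_eq_iff minus_complex.simps one_complex.simps right_minus_eq sum_power2_gt_zero_iff)
  have "Re (cay w) = ((Re w + 1) * (Re w - 1) + Im w * Im w) / ((Re (w - 1))\<^sup>2 + (Im (w - 1))\<^sup>2)"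
    by (simp add: cay_def Re_divide)
  also have "\<dots> < 0" using nv den
    by (intro divide_neg_pos) (auto simp: algebra_simps power2_eq_square)
  finally show ?thesis .
qed

lemma cay_norm:
  assumes "Re w < 0"
  shows "norm (cay w) < 1"
proof -
  have w1: "w \<noteq> 1" using assms by auto
  have e1: "(norm (w + 1))\<^sup>2 = (Re w + 1)\<^sup>2 + (Im w)\<^sup>2" by (simp add: cmod_power2)
  have e2: "(norm (w - 1))\<^sup>2 = (Re w - 1)\<^sup>2 + (Im w)\<^sup>2" by (simp add: cmod_power2)
  have "(Re w + 1)\<^sup>2 < (Re w - 1)\<^sup>2" using assms by (simp add: power2_eq_square algebra_simps)
  then have "(norm (w + 1))\<^sup>2 < (norm (w - 1))\<^sup>2" using e1 e2 by simp
  then have "norm (w + 1) < norm (w - 1)" by (simp add: power_less_imp_less_base)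
  then show ?thesis using w1 by (simp add: cay_def norm_divide divide_less_eq)
qed

lemma cay_cay: "w \<noteq> 1 \<Longrightarrow> cay (cay w) = w"
  unfolding cay_def by (simp add: field_simps)

lemma cay_homeo: "homeomorphism (ball 0 1) {w. Re w < 0} cay cay"
proof (rule homeomorphismI)
  show "continuous_on (ball 0 1) cay" unfolding cay_def
    by (intro continuous_intros) auto
  show "continuous_on {w. Re w < 0} cay" unfolding cay_def
    by (intro continuous_intros) auto
  show "cay ` ball 0 1 \<subseteq> {w. Re w < 0}" using cay_Re by auto
  show "cay ` {w. Re w < 0} \<subseteq> ball 0 1" using cay_norm by auto
  show "\<And>x. x \<in> ball 0 1 \<Longrightarrow> cay (cay x) = x"
  proof -
    fix x :: complex assume "x \<in> ball 0 1"
    then have "x \<noteq> 1" by auto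
    then show "cay (cay x) = x" by (rule cay_cay)
  qed
  show "\<And>x. x \<in> {w. Re w < 0} \<Longrightarrow> cay (cay x) = x"
  proof -
    fix x :: complex assume "x \<in> {w. Re w < 0}"
    then have "x \<noteq> 1" by auto
    then show "cay (cay x) = x" by (rule cay_cay)
  qed
qed

lemma exp_cover: "covering_space {w. Re w < 0} exp (ball 0 1 - {0})"
proof -
  have "openin (top_of_set (- {0})) (ball (0::complex) 1 - {0})"
    by (intro open_openin_trans) auto
  from covering_space_restrict[OF covering_space_exp_punctured_plane this]
  have "covering_space (UNIV \<inter> exp -` (ball 0 1 - {0})) exp (ball (0::complex) 1 - {0})" .
  moreover have "UNIV \<inter> exp -` (ball 0 1 - {0}) = {w::complex. Re w < 0}" by auto
  ultimately show ?thesis by simp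
qed



lemma mob_zero[simp]: "mob c 0 = of_real c"
  by (simp add: mob_def)

lemma mob_inv': "norm v < 1 \<Longrightarrow> \<bar>c\<bar> < 1 \<Longrightarrow> mob c (mob (-c) v) = v"
  using mob_inv[of v "-c"] by simp

lemma punct_homeo:
  fixes r r0 :: real
  assumes r: "0 < r" "r < r0"
  defines "c \<equiv> r / r0"
  shows "homeomorphism (ball 0 1 - {0}) (ball 0 r0 - {of_real r})
           (\<lambda>v. of_real r0 * mob c v) (\<lambda>w. mob (-c) (w / of_real r0))"
proof (rule homeomorphismI)
  have r0: "r0 > 0" using r by simp
  have c: "\<bar>c\<bar> < 1" "0 < c" using r by (auto simp: c_def divide_less_eq)
  have mc: "\<bar>-c\<bar> < 1" using c by simp
  have rc0: "r0 * c = r" using r0 by (simp add: c_def)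
  have rc: "of_real r0 * of_real c = (of_real r :: complex)"
    using rc0 by (metis of_real_mult)
  show "continuous_on (ball 0 1 - {0}) (\<lambda>v. of_real r0 * mob c v)"
    by (intro continuous_intros continuous_on_subset[OF mob_cont[OF c(1)]]) auto
  have "continuous_on (ball 0 r0 - {of_real r}) (mob (-c) \<circ> (\<lambda>w. w / of_real r0))"
  proof (rule continuous_on_compose)
    show "continuous_on (ball 0 r0 - {of_real r}) (\<lambda>w. w / complex_of_real r0)"
      by (intro continuous_intros) (use r0 in auto)
    show "continuous_on ((\<lambda>w. w / complex_of_real r0) ` (ball 0 r0 - {complex_of_real r})) (mob (- c))"
      using r0 by (intro continuous_on_subset[OF mob_cont[OF mc]]) (auto simp: norm_divide)
  qed
  then show "continuous_on (ball 0 r0 - {of_real r}) (\<lambda>w. mob (-c) (w / of_real r0))"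
    by (simp add: o_def)
  show "(\<lambda>v. of_real r0 * mob c v) ` (ball 0 1 - {0}) \<subseteq> ball 0 r0 - {of_real r}"
  proof (rule image_subsetI)
    fix v :: complex assume "v \<in> ball 0 1 - {0}"
    then have v: "v \<in> ball 0 1" "v \<noteq> 0" by auto
    then have nv: "norm v < 1" by simp
    have "norm (of_real r0 * mob c v) < r0"
      using mob_in_ball[OF nv c(1)] r0 by (simp add: norm_mult)
    moreover have "of_real r0 * mob c v \<noteq> of_real r"
    proof
      assume "of_real r0 * mob c v = of_real r"
      then have "of_real r0 * mob c v = of_real r0 * of_real c" using rc by simp
      then have "mob c v = of_real c" using r0 by simp
      then have "mob (-c) (mob c v) = 0" by (simp add: mob_def)
      then show False using mob_inv[OF nv c(1)] v by simp
    qed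
    ultimately show "of_real r0 * mob c v \<in> ball 0 r0 - {of_real r}" by simp
  qed
  show "(\<lambda>w. mob (-c) (w / of_real r0)) ` (ball 0 r0 - {of_real r}) \<subseteq> ball 0 1 - {0}"
  proof (rule image_subsetI)
    fix w :: complex assume "w \<in> ball 0 r0 - {of_real r}"
    then have w: "w \<in> ball 0 r0" "w \<noteq> of_real r" by auto
    then have nw: "norm (w / of_real r0) < 1" using r0 by (simp add: norm_divide)
    have "norm (mob (-c) (w / of_real r0)) < 1" using mob_in_ball[OF nw mc] .
    moreover have "mob (-c) (w / of_real r0) \<noteq> 0"
    proof
      assume "mob (-c) (w / of_real r0) = 0"
      then have "mob c (mob (-c) (w / of_real r0)) = of_real c" by simp
      then have "w / of_real r0 = of_real c" using mob_inv'[OF nw c(1)] by simp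
      then have "w = of_real r" using r0 rc by (simp add: field_simps)
      then show False using w by simp
    qed
    ultimately show "mob (-c) (w / of_real r0) \<in> ball 0 1 - {0}" by simp
  qed
  show "\<And>x. x \<in> ball 0 1 - {0} \<Longrightarrow> mob (-c) (of_real r0 * mob c x / of_real r0) = x"
    using mob_inv[OF _ c(1)] r0 by simp
  show "\<And>y. y \<in> ball 0 r0 - {of_real r} \<Longrightarrow> of_real r0 * mob c (mob (-c) (y / of_real r0)) = y"
  proof -
    fix y :: complex assume "y \<in> ball 0 r0 - {of_real r}"
    then have ny: "norm (y / of_real r0) < 1" using r0 by (simp add: norm_divide)
    show "of_real r0 * mob c (mob (-c) (y / of_real r0)) = y"
      using mob_inv'[OF ny c(1)] r0 by simp
  qed
qed

definition Pcov :: "real \<Rightarrow> real \<Rightarrow> complex \<Rightarrow> complex" where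
  "Pcov r0 r = (\<lambda>v. of_real r0 * mob (r / r0) v) \<circ> (exp \<circ> cay)"

lemma Pcov_cover:
  fixes r r0 :: real
  assumes r: "0 < r" "r < r0"
  shows "covering_space (ball 0 1) (Pcov r0 r) (ball 0 r0 - {of_real r})"
proof -
  have "covering_space (ball 0 1) (exp \<circ> cay) (ball 0 1 - {0})"
    by (rule covering_space_compose_homeo[OF exp_cover cay_homeo])
  from covering_space_homeo_compose[OF this punct_homeo[OF r]]
  show ?thesis unfolding Pcov_def .
qed

lemma Pcov_holo:
  fixes r r0 :: real
  assumes r: "0 < r" "r < r0"
  shows "Pcov r0 r holomorphic_on ball 0 1"
proof -
  have c: "\<bar>r / r0\<bar> < 1" using r by (auto simp: divide_less_eq)
  have h1: "cay holomorphic_on ball 0 1" unfolding cay_def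
    by (intro holomorphic_intros) auto
  have h2: "(\<lambda>w. exp (cay w)) holomorphic_on ball 0 1"
    using h1 by (intro holomorphic_intros)
  have nz: "\<And>w. w \<in> ball 0 1 \<Longrightarrow> 1 + of_real (r / r0) * exp (cay w) \<noteq> 0"
  proof -
    fix w :: complex assume "w \<in> ball 0 1"
    then have "Re (cay w) < 0" using cay_Re by simp
    then have "norm (exp (cay w)) < 1" by simp
    then show "1 + of_real (r / r0) * exp (cay w) \<noteq> 0" using mob_den_nz[OF _ c] by blast
  qed
  have "(\<lambda>w. of_real r0 * ((exp (cay w) + of_real (r / r0)) / (1 + of_real (r / r0) * exp (cay w))))
         holomorphic_on ball 0 1"
    by (intro holomorphic_on_mult holomorphic_on_divide holomorphic_on_add holomorphic_on_const h2 nz)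
  then show ?thesis unfolding Pcov_def mob_def o_def by simp
qed

lemma ball_cover:
  fixes r0 :: real
  assumes "0 < r0"
  shows "covering_space (ball 0 1) (\<lambda>w::complex. of_real r0 * w) (ball 0 r0)"
proof (rule homeomorphism_imp_covering_space)
  show "homeomorphism (ball 0 1) (ball 0 r0) (\<lambda>w::complex. of_real r0 * w) (\<lambda>w. w / of_real r0)"
  proof (rule homeomorphismI)
    show "continuous_on (ball 0 1) (\<lambda>w::complex. of_real r0 * w)" 
      using continuous_on_mult_left[where c="of_real r0::complex" and s="ball 0 1" and f="\<lambda>x. x"] by simp
    show "continuous_on (ball 0 r0) (\<lambda>w::complex. w / of_real r0)" by (intro continuous_intros) (use assms in auto)
    show "(\<lambda>w::complex. of_real r0 * w) ` ball 0 1 \<subseteq> ball 0 r0"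
    proof (rule image_subsetI)
      fix w :: complex assume "w \<in> ball 0 1"
      then have "norm w < 1" by simp
      then have "r0 * norm w < r0" using assms by simp
      then show "of_real r0 * w \<in> ball 0 r0" using assms by (simp add: norm_mult)
    qed
    show "(\<lambda>w::complex. w / of_real r0) ` ball 0 r0 \<subseteq> ball 0 1" using assms by (auto simp: norm_divide dist_norm)
  qed (use assms in auto)
qed



lemma disk_identity:
  fixes a b :: complex
  shows "(norm (1 - cnj a * b))\<^sup>2 - (norm (a - b))\<^sup>2 = (1 - (norm a)\<^sup>2) * (1 - (norm b)\<^sup>2)"
  unfolding cmod_power2 by (simp add: algebra_simps power2_eq_square)

lemma disk_lt:
  fixes a b :: complex
  assumes "norm a < 1" "norm b < 1"
  shows "norm (a - b) < norm (1 - cnj a * b)"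
proof -
  have "(norm a)\<^sup>2 < 1" "(norm b)\<^sup>2 < 1" using assms by (simp_all add: power_less_one_iff abs_square_less_1)
  then have "(1 - (norm a)\<^sup>2) * (1 - (norm b)\<^sup>2) > 0" by simp
  then have "(norm (a - b))\<^sup>2 < (norm (1 - cnj a * b))\<^sup>2" using disk_identity[of a b] by linarith
  then show ?thesis by (simp add: power_less_imp_less_base)
qed

lemma artanh_nonneg:
  fixes x :: real
  assumes "0 \<le> x" "x < 1"
  shows "0 \<le> artanh x"
proof -
  have "1 \<le> (1 + x) / (1 - x)" using assms by (simp add: le_divide_eq)
  then show ?thesis unfolding artanh_def by simp
qed

lemma artanh_le:
  fixes x :: real
  assumes "0 \<le> x" "x \<le> 1/2"
  shows "artanh x \<le> 2 * x"
proof -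
  have pos: "0 < (1 + x) / (1 - x)" using assms by simp
  have "ln ((1 + x) / (1 - x)) \<le> (1 + x) / (1 - x) - 1" using ln_le_minus_one[OF pos] .
  also have "\<dots> = 2 * x / (1 - x)" using assms by (simp add: field_simps)
  also have "\<dots> \<le> 4 * x"
  proof -
    have "4 * x * (1 - x) - 2 * x = 2 * x * (1 - 2 * x)" by (simp add: algebra_simps)
    moreover have "0 \<le> 2 * x * (1 - 2 * x)" using assms by simp
    ultimately have "2 * x \<le> 4 * x * (1 - x)" by linarith
    then show ?thesis using assms by (simp add: divide_le_eq)
  qed
  finally show ?thesis unfolding artanh_def by simp
qed

lemma disk_dist_nonneg:
  assumes "norm a < 1" "norm b < 1"
  shows "0 \<le> disk_hyp_dist a b"
proof -
  have lt: "norm (a - b) < norm (1 - cnj a * b)" using disk_lt[OF assms] .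
  then have "norm (a - b) / norm (1 - cnj a * b) < 1" by (simp add: divide_less_eq)
  moreover have "0 \<le> norm (a - b) / norm (1 - cnj a * b)" by simp
  ultimately show ?thesis unfolding disk_hyp_dist_def using artanh_nonneg by simp
qed

lemma cay_dist:
  assumes "Re w1 < 0" "Re w2 < 0"
  shows "norm (cay w1 - cay w2) / norm (1 - cnj (cay w1) * cay w2) = norm (w1 - w2) / norm (cnj w1 + w2)"
proof -
  have n1: "w1 - 1 \<noteq> 0" "w2 - 1 \<noteq> 0" "cnj w1 - 1 \<noteq> 0" using assms by (auto simp: complex_eq_iff)
  have n3: "cnj w1 + w2 \<noteq> 0" using assms by (auto simp: complex_eq_iff)
  have E1: "cay w1 - cay w2 = 2 * (w2 - w1) / ((w1 - 1) * (w2 - 1))"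
    using n1 unfolding cay_def by (simp add: field_simps, (simp add: algebra_simps)?)
  have cc: "cnj (cay w1) = (cnj w1 + 1) / (cnj w1 - 1)" unfolding cay_def by simp
  have E2: "1 - cnj (cay w1) * cay w2 = - 2 * (cnj w1 + w2) / ((cnj w1 - 1) * (w2 - 1))"
  proof -
    have gen: "\<And>u v::complex. u - 1 \<noteq> 0 \<Longrightarrow> v - 1 \<noteq> 0 \<Longrightarrow>
       1 - (u + 1) / (u - 1) * ((v + 1) / (v - 1)) = - 2 * (u + v) / ((u - 1) * (v - 1))"
    proof -
      fix u v :: complex assume a: "u - 1 \<noteq> 0" "v - 1 \<noteq> 0"
      have "1 - (u + 1) / (u - 1) * ((v + 1) / (v - 1)) = ((u - 1) * (v - 1) - (u + 1) * (v + 1)) / ((u - 1) * (v - 1))"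
        using a by (simp add: diff_divide_distrib)
      also have "(u - 1) * (v - 1) - (u + 1) * (v + 1) = - 2 * (u + v)" by (simp add: algebra_simps)
      finally show "1 - (u + 1) / (u - 1) * ((v + 1) / (v - 1)) = - 2 * (u + v) / ((u - 1) * (v - 1))" .
    qed
    have "1 - cnj (cay w1) * cay w2 = 1 - (cnj w1 + 1) / (cnj w1 - 1) * ((w2 + 1) / (w2 - 1))"
      by (subst cc) (simp only: cay_def)
    also have "\<dots> = - 2 * (cnj w1 + w2) / ((cnj w1 - 1) * (w2 - 1))" by (rule gen[OF n1(3) n1(2)])
    finally show ?thesis .
  qed
  have nc: "norm (cnj w1 - 1) = norm (w1 - 1)"
    by (metis complex_cnj_diff complex_cnj_one complex_mod_cnj)
  have "norm (cay w1 - cay w2) / norm (1 - cnj (cay w1) * cay w2)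
        = (2 * norm (w2 - w1) / (norm (w1 - 1) * norm (w2 - 1))) /
          (2 * norm (cnj w1 + w2) / (norm (w1 - 1) * norm (w2 - 1)))"
    unfolding E1 E2 norm_divide norm_mult nc by simp
  also have "\<dots> = norm (w2 - w1) / norm (cnj w1 + w2)"
    using n1 n3 by (simp add: field_simps)
  also have "\<dots> = norm (w1 - w2) / norm (cnj w1 + w2)" by (simp add: norm_minus_commute)
  finally show ?thesis .
qed



lemma hyp_dist_le:
  assumes "p holomorphic_on ball 0 1" "covering_space (ball 0 1) p W"
    "norm a < 1" "norm b < 1" "p a = z" "p b = w" "disk_hyp_dist a b \<le> B"
  shows "hyp_dist W z w \<le> B"
  unfolding hyp_dist_def
proof (rule cInf_lower2)
  show "disk_hyp_dist a b \<in> {disk_hyp_dist a b |a b p.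
      p holomorphic_on ball 0 1 \<and> covering_space (ball 0 1) p W \<and>
      a \<in> ball 0 1 \<and> b \<in> ball 0 1 \<and> p a = z \<and> p b = w}"
    using assms by fastforce
  show "disk_hyp_dist a b \<le> B" by fact
  show "bdd_below {disk_hyp_dist a b |a b p.
      p holomorphic_on ball 0 1 \<and> covering_space (ball 0 1) p W \<and>
      a \<in> ball 0 1 \<and> b \<in> ball 0 1 \<and> p a = z \<and> p b = w}"
    by (rule bdd_belowI[of _ 0]) (auto intro!: disk_dist_nonneg)
qed

lemma caseA:
  fixes r0 r \<gamma> \<delta> L :: real and z :: complex
  assumes r0: "0 < r0" "r0 \<le> r" and g: "0 < \<gamma>" "\<gamma> \<le> r0 / 8"
    and d: "0 < \<delta>" "\<delta> < 1/10" and L: "1 \<le> L"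
    and z: "cmod z \<le> \<gamma> * \<delta> / L"
  shows "hyp_dist (ball 0 r0 - {complex_of_real r}) 0 z \<le> \<delta> / (2 * L)"
proof -
  have W: "ball 0 r0 - {complex_of_real r} = ball 0 r0" using r0 by auto
  define x where "x = cmod z / r0"
  have x0: "0 \<le> x" using r0 by (simp add: x_def)
  have "x \<le> \<gamma> * \<delta> / L / r0" unfolding x_def
    by (rule divide_right_mono[OF z]) (use r0 in simp)
  also have "\<dots> = (\<gamma> / r0) * (\<delta> / L)" by simp
  also have "\<dots> \<le> (1/8) * (\<delta> / L)"
    using g r0 d L by (intro mult_right_mono) (auto simp: divide_le_eq)
  finally have xb: "x \<le> \<delta> / (8 * L)" by simp
  have "\<delta> / (8 * L) \<le> 1/2" using d L by (simp add: divide_le_eq)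
  then have xh: "x \<le> 1/2" using xb by linarith
  have bz: "norm (z / of_real r0) < 1" using xh r0 by (simp add: x_def norm_divide)
  have "disk_hyp_dist 0 (z / of_real r0) = 2 * artanh x"
    unfolding disk_hyp_dist_def x_def using r0 by (simp add: norm_divide)
  also have "\<dots> \<le> 4 * x" using artanh_le[OF x0 xh] by simp
  also have "\<dots> \<le> \<delta> / (2 * L)" using xb by simp
  finally have dd: "disk_hyp_dist 0 (z / of_real r0) \<le> \<delta> / (2 * L)" .
  show ?thesis unfolding W
    by (rule hyp_dist_le[OF _ ball_cover[OF r0(1)] _ bz _ _ dd]) (use r0 in \<open>auto intro!: holomorphic_intros\<close>)
qed



lemma caseB:
  fixes r0 r \<gamma> \<delta> L Lr K :: real and z :: complex
  assumes r: "0 < r" "r < r0" "r0 < 1" and K: "K = 3 - 2 * ln r0"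
    and g: "0 < \<gamma>" "\<gamma> * K \<le> 1/32" and d: "0 < \<delta>" "\<delta> < 1/10"
    and L: "Lr \<le> L" and Lr: "Lr = 1 - ln r"
    and z: "cmod z \<le> \<gamma> * \<delta> * r * Lr / L"
  shows "hyp_dist (ball 0 r0 - {of_real r}) 0 z \<le> \<delta> / (2 * L)"
proof -
  have r0: "0 < r0" using r by simp
  define c where "c = r / r0"
  define l where "l = - ln c"
  have c0: "0 < c" "c < 1" using r by (auto simp: c_def divide_less_eq)
  have cabs: "\<bar>c\<bar> < 1" "\<bar>-c\<bar> < 1" using c0 by auto
  have l0: "0 < l" using c0 by (simp add: l_def)
  have rc: "r0 * c = r" using r0 by (simp add: c_def)
  have lnr: "ln r = ln r0 - l"
  proof -
    have "ln r = ln (r0 * c)" using rc by simp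
    also have "\<dots> = ln r0 + ln c" using r0 c0 by (simp add: ln_mult)
    finally show ?thesis by (simp add: l_def)
  qed
  have lnr0: "ln r0 < 0" using r by simp
  have K3: "3 \<le> K" using K lnr0 by simp
  have g96: "\<gamma> \<le> 1/96"
  proof -
    have "\<gamma> * 3 \<le> \<gamma> * K" using K3 g by simp
    then show ?thesis using g by linarith
  qed
  have Lr1: "1 \<le> Lr" using Lr r by simp
  have L1: "1 \<le> L" using L Lr1 by simp
  define \<zeta> where "\<zeta> = cmod z / r"
  have \<zeta>0: "0 \<le> \<zeta>" using r by (simp add: \<zeta>_def)
  have \<zeta>L: "\<zeta> * L \<le> \<gamma> * \<delta> * Lr"
  proof -
    have "cmod z * L \<le> \<gamma> * \<delta> * r * Lr" using z L1 by (simp add: le_divide_eq)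
    then have "cmod z * L \<le> (\<gamma> * \<delta> * Lr) * r" by (simp add: mult_ac)
    then have "cmod z * L / r \<le> \<gamma> * \<delta> * Lr" using r by (simp add: divide_le_eq)
    moreover have "\<zeta> * L = cmod z * L / r" by (simp add: \<zeta>_def)
    ultimately show ?thesis by simp
  qed
  have \<zeta>g: "\<zeta> \<le> \<gamma>"
  proof -
    have "\<gamma> * \<delta> * Lr \<le> \<gamma> * 1 * L" using g d L Lr1 by (intro mult_mono) auto
    then have "\<zeta> * L \<le> \<gamma> * L" using \<zeta>L by simp
    then show ?thesis using L1 by simp
  qed
  have nzr: "cmod z \<le> \<gamma> * r" using \<zeta>g r by (simp add: \<zeta>_def divide_le_eq mult.commute)
  define u where "u = z / of_real r0"
  have nu: "norm u = c * \<zeta>" using r0 r by (simp add: u_def \<zeta>_def c_def norm_divide)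
  have nu2: "norm u \<le> 1/2"
  proof -
    have "c * \<zeta> \<le> 1 * \<zeta>" using c0 \<zeta>0 by (intro mult_right_mono) auto
    then show ?thesis using nu \<zeta>g g96 by simp
  qed
  have nu1: "norm u < 1" using nu2 by simp
  define Mz where "Mz = mob (-c) u"
  have Mz1: "norm Mz < 1" unfolding Mz_def by (rule mob_in_ball[OF nu1 cabs(2)])
  have zr: "z \<noteq> of_real r"
  proof
    assume "z = of_real r"
    then have "cmod z = r" using r by simp
    moreover have "\<gamma> * r \<le> (1/96) * r" using g96 r by (intro mult_right_mono) auto
    ultimately show False using nzr r by linarith
  qed
  have Mz0: "Mz \<noteq> 0"
  proof
    assume "Mz = 0"
    then have "mob c Mz = of_real c" by simp
    then have "u = of_real c" using mob_inv'[OF nu1 cabs(1)] by (simp add: Mz_def)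
    then have "z = of_real r0 * of_real c" using r0 by (simp add: u_def field_simps)
    also have "\<dots> = of_real (r0 * c)" by simp
    finally have "z = of_real r" using rc by simp
    then show False using zr by simp
  qed
  have den: "1 - of_real c * u \<noteq> 0" using mob_den_nz[OF nu1 cabs(2)] by simp
  have cu: "norm (1 - of_real c * u) \<ge> 1/2"
  proof -
    have "norm (of_real c * u) \<le> 1/2"
    proof -
      have "c * norm u \<le> 1 * norm u" using c0 by (intro mult_right_mono) auto
      then show ?thesis using nu2 c0 by (simp add: norm_mult)
    qed
    moreover have "1 - norm (of_real c * u) \<le> norm (1 - of_real c * u)"
      using norm_triangle_ineq2[of 1 "of_real c * u"] by simp
    ultimately show ?thesis by linarith
  qed
  have Mzc: "Mz + of_real c = u * (1 - (of_real c)\<^sup>2) / (1 - of_real c * u)"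
    using den unfolding Mz_def mob_def by (simp add: field_simps power2_eq_square)
  define q where "q = - Mz / of_real c"
  have q0: "q \<noteq> 0" using Mz0 c0 by (simp add: q_def)
  have q1: "q - 1 = - (Mz + of_real c) / of_real c" using c0 by (simp add: q_def field_simps)
  have c2: "0 \<le> 1 - c\<^sup>2" "1 - c\<^sup>2 \<le> 1" using c0 by (auto simp: power_le_one)
  have c2l: "1 - c\<^sup>2 \<le> 2 * l"
  proof -
    have "ln c \<le> c - 1" using ln_le_minus_one c0 by simp
    then have "1 - c \<le> l" by (simp add: l_def)
    moreover have "1 - c\<^sup>2 = (1 - c) * (1 + c)" by (simp add: algebra_simps power2_eq_square)
    moreover have "(1 - c) * (1 + c) \<le> l * 2" using c0 \<open>1 - c \<le> l\<close> by (intro mult_mono) auto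
    ultimately show ?thesis by simp
  qed
  have tq: "norm (q - 1) \<le> 2 * \<zeta> * (1 - c\<^sup>2)"
  proof -
    have "norm (q - 1) = norm u * (1 - c\<^sup>2) / (norm (1 - of_real c * u) * c)"
    proof -
      have "(1 - (of_real c)\<^sup>2 :: complex) = of_real (1 - c\<^sup>2)" by simp
      then have "norm (1 - (of_real c)\<^sup>2 :: complex) = norm (of_real (1 - c\<^sup>2) :: complex)" by (simp only:)
      also have "\<dots> = \<bar>1 - c\<^sup>2\<bar>" by (rule norm_of_real)
      also have "\<dots> = 1 - c\<^sup>2" using c2 by (simp only: abs_of_nonneg)
      finally have nc2: "norm (1 - (of_real c)\<^sup>2 :: complex) = 1 - c\<^sup>2" .
      show ?thesis unfolding q1 Mzc norm_divide norm_mult norm_minus_cancel nc2 using c0 by simp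
    qed
    also have "\<dots> = \<zeta> * (1 - c\<^sup>2) / norm (1 - of_real c * u)"
      unfolding nu using c0 by simp
    also have "\<dots> \<le> \<zeta> * (1 - c\<^sup>2) / (1/2)"
      using cu \<zeta>0 c2 by (intro divide_left_mono) auto
    finally show ?thesis by simp
  qed
  have tq2: "norm (q - 1) < 1/2"
  proof -
    have "2 * \<zeta> * (1 - c\<^sup>2) \<le> 2 * \<zeta> * 1" using c2 \<zeta>0 by (intro mult_left_mono) auto
    then show ?thesis using tq \<zeta>g g96 by simp
  qed
  define lam where "lam = norm (Ln q)"
  have lam1: "lam \<le> 4 * \<zeta> * (1 - c\<^sup>2)"
    using norm_Ln_le[OF tq2] tq by (simp add: lam_def)
  have lam2: "lam \<le> 8 * \<zeta> * l"
  proof -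
    have "4 * \<zeta> * (1 - c\<^sup>2) \<le> 4 * \<zeta> * (2 * l)" using c2l \<zeta>0 by (intro mult_left_mono) auto
    then show ?thesis using lam1 by simp
  qed
  have lam3: "lam \<le> l"
  proof -
    have h: "8 * \<zeta> * l \<le> 8 * (1/96) * l" using \<zeta>g g96 l0 by (intro mult_right_mono) auto
    show ?thesis using lam2 l0 h by linarith
  qed
  define w1 where "w1 = Complex (ln c) pi"
  define w2 where "w2 = w1 + Ln q"
  have ew1: "exp w1 = - of_real c" using c0 by (simp add: w1_def exp_Complex complex_eq_iff)
  have ew2: "exp w2 = Mz" using c0 q0 by (simp add: w2_def exp_add ew1 q_def)
  have Rw1: "Re w1 < 0" using c0 by (simp add: w1_def)
  have Rw2: "Re w2 < 0"
  proof -
    have "norm (exp w2) = exp (Re w2)" by (rule norm_exp_eq_Re)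
    then have "exp (Re w2) < 1" using Mz1 ew2 by simp
    then show ?thesis by simp
  qed
  define a where "a = cay w1"
  define b where "b = cay w2"
  have na: "norm a < 1" using cay_norm[OF Rw1] by (simp add: a_def)
  have nb: "norm b < 1" using cay_norm[OF Rw2] by (simp add: b_def)
  have w1n: "w1 \<noteq> 1" "w2 \<noteq> 1" using Rw1 Rw2 by auto
  have Pa: "Pcov r0 r a = 0"
    using c0 unfolding Pcov_def a_def c_def[symmetric] by (simp add: cay_cay[OF w1n(1)] ew1 mob_def)
  have Pb: "Pcov r0 r b = z"
  proof -
    have "Pcov r0 r b = of_real r0 * mob c Mz"
      unfolding Pcov_def b_def c_def[symmetric] by (simp add: cay_cay[OF w1n(2)] ew2)
    also have "mob c Mz = u" unfolding Mz_def by (rule mob_inv'[OF nu1 cabs(1)])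
    finally show ?thesis using r0 by (simp add: u_def)
  qed
  define N where "N = norm (cnj w1 + w2)"
  have N: "l \<le> N"
  proof -
    have "Re (cnj w1 + w2) = 2 * ln c + Re (Ln q)" by (simp add: w2_def w1_def)
    moreover have "\<bar>Re (Ln q)\<bar> \<le> lam" unfolding lam_def by (rule abs_Re_le_cmod)
    moreover have "\<bar>Re (cnj w1 + w2)\<bar> \<le> N" unfolding N_def by (rule abs_Re_le_cmod)
    ultimately show ?thesis using lam3 by (simp add: l_def)
  qed
  have N0: "0 < N" using N l0 by simp
  define x where "x = lam / N"
  have x0: "0 \<le> x" using N0 by (simp add: x_def lam_def)
  have xl: "x \<le> lam / l" unfolding x_def using N l0 by (intro divide_left_mono) (auto simp: lam_def)
  have key: "Lr * (1 - c\<^sup>2) \<le> K * l"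
  proof -
    have e: "Lr = (1 - ln r0) + l" using Lr lnr by simp
    have "(1 - ln r0) * (1 - c\<^sup>2) \<le> (1 - ln r0) * (2 * l)" using c2l lnr0 by (intro mult_left_mono) auto
    moreover have "l * (1 - c\<^sup>2) \<le> l * 1" using c2 l0 by (intro mult_left_mono) auto
    ultimately have "Lr * (1 - c\<^sup>2) \<le> (1 - ln r0) * (2 * l) + l" unfolding e by (simp add: algebra_simps)
    also have "\<dots> = K * l" unfolding K by (simp add: algebra_simps)
    finally show ?thesis .
  qed
  have xL: "x * L \<le> \<delta> / 8"
  proof -
    have "x * L \<le> (4 * \<zeta> * (1 - c\<^sup>2) / l) * L"
    proof (rule mult_right_mono)
      have "lam / l \<le> 4 * \<zeta> * (1 - c\<^sup>2) / l" by (rule divide_right_mono[OF lam1]) (use l0 in simp)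
      then show "x \<le> 4 * \<zeta> * (1 - c\<^sup>2) / l" using xl by linarith
    qed (use L1 in simp)
    also have "\<dots> = 4 * (\<zeta> * L) * (1 - c\<^sup>2) / l" by simp
    also have "\<dots> \<le> 4 * (\<gamma> * \<delta> * Lr) * (1 - c\<^sup>2) / l"
      using \<zeta>L c2 l0 by (intro divide_right_mono mult_right_mono mult_left_mono) auto
    also have "\<dots> = 4 * \<gamma> * \<delta> * (Lr * (1 - c\<^sup>2)) / l" by simp
    also have "\<dots> \<le> 4 * \<gamma> * \<delta> * (K * l) / l"
      using key g d l0 by (intro divide_right_mono mult_left_mono) auto
    also have "\<dots> = 4 * (\<gamma> * K) * \<delta>" using l0 by simp
    also have "\<dots> \<le> 4 * (1/32) * \<delta>" using g d by (intro mult_right_mono mult_left_mono) auto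
    finally show ?thesis by simp
  qed
  have xb: "x \<le> \<delta> / (8 * L)" using xL L1 by (simp add: le_divide_eq mult_ac)
  have "\<delta> / (8 * L) \<le> 1/2" using d L1 by (simp add: divide_le_eq)
  then have xh: "x \<le> 1/2" using xb by linarith
  have "disk_hyp_dist a b = 2 * artanh x"
    unfolding disk_hyp_dist_def a_def b_def cay_dist[OF Rw1 Rw2] x_def lam_def N_def
    by (simp add: w2_def)
  also have "\<dots> \<le> 4 * x" using artanh_le[OF x0 xh] by simp
  also have "\<dots> \<le> \<delta> / (2 * L)" using xb by simp
  finally have dd: "disk_hyp_dist a b \<le> \<delta> / (2 * L)" .
  show ?thesis
    by (rule hyp_dist_le[OF Pcov_holo[OF r(1,2)] Pcov_cover[OF r(1,2)] na nb Pa Pb dd])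
qed



theorem lemma7:
  fixes r0 :: real
  assumes "0 < r0" and "r0 < 1"
  shows "\<exists>\<gamma>>0. \<forall>\<delta> \<alpha> r (z::complex).
           0 < \<delta> \<and> \<delta> < 1/10 \<and> 0 < \<alpha> \<and> \<alpha> < r \<and> r \<le> 1 \<and>
           cmod z \<le> \<gamma> * \<delta> * r * ln (exp 1 / r) / ln (exp 1 / \<alpha>) \<longrightarrow>
           hyp_dist (ball 0 r0 - {complex_of_real r}) 0 z \<le> \<delta> / (2 * ln (exp 1 / \<alpha>))"
proof -
  define K where "K = 3 - 2 * ln r0"
  have lnr0: "ln r0 < 0" using assms by simp
  have K3: "3 \<le> K" using lnr0 by (simp add: K_def)
  define \<gamma> where "\<gamma> = min (r0 / 8) (1 / (32 * K))"
  have gpos: "0 < \<gamma>" using assms K3 by (simp add: \<gamma>_def)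
  have g1: "\<gamma> \<le> r0 / 8" by (simp add: \<gamma>_def)
  have g2: "\<gamma> * K \<le> 1/32"
  proof -
    have "\<gamma> \<le> 1 / (32 * K)" by (simp add: \<gamma>_def)
    then have "\<gamma> * K \<le> 1 / (32 * K) * K" using K3 by (intro mult_right_mono) auto
    also have "\<dots> = 1/32" using K3 by simp
    finally show ?thesis .
  qed
  show ?thesis
  proof (intro exI[of _ \<gamma>] conjI allI impI)
    show "0 < \<gamma>" by (rule gpos)
    fix \<delta> \<alpha> r :: real and z :: complex
    assume H: "0 < \<delta> \<and> \<delta> < 1/10 \<and> 0 < \<alpha> \<and> \<alpha> < r \<and> r \<le> 1 \<and>
           cmod z \<le> \<gamma> * \<delta> * r * ln (exp 1 / r) / ln (exp 1 / \<alpha>)"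
    then have d: "0 < \<delta>" "\<delta> < 1/10" and a: "0 < \<alpha>" "\<alpha> < r" "r \<le> 1"
      and z: "cmod z \<le> \<gamma> * \<delta> * r * ln (exp 1 / r) / ln (exp 1 / \<alpha>)" by auto
    have r0': "0 < r" using a by simp
    define L where "L = ln (exp 1 / \<alpha>)"
    define Lr where "Lr = ln (exp 1 / r)"
    have Lr: "Lr = 1 - ln r" unfolding Lr_def using r0' by (simp add: ln_div)
    have Le: "L = 1 - ln \<alpha>" unfolding L_def using a by (simp add: ln_div)
    have LrL: "Lr \<le> L" using Lr Le a by simp
    have Lr1: "1 \<le> Lr" using Lr a by simp
    have L1: "1 \<le> L" using LrL Lr1 by simp
    have z': "cmod z \<le> \<gamma> * \<delta> * r * Lr / L" using z by (simp add: L_def Lr_def)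
    show "hyp_dist (ball 0 r0 - {complex_of_real r}) 0 z \<le> \<delta> / (2 * ln (exp 1 / \<alpha>))"
    proof (cases "r0 \<le> r")
      case True
      have "ln (1 / r) \<le> 1 / r - 1" using r0' by (intro ln_le_minus_one) simp
      then have "Lr \<le> 1 / r" using Lr r0' by (simp add: ln_div)
      then have rLr: "r * Lr \<le> 1" using r0' by (simp add: le_divide_eq mult.commute)
      have "\<gamma> * \<delta> * r * Lr = (\<gamma> * \<delta>) * (r * Lr)" by simp
      also have "\<dots> \<le> (\<gamma> * \<delta>) * 1" using rLr gpos d by (intro mult_left_mono) auto
      finally have "\<gamma> * \<delta> * r * Lr / L \<le> \<gamma> * \<delta> / L" using L1 by (simp add: divide_right_mono)
      then have zA: "cmod z \<le> \<gamma> * \<delta> / L" using z' by linarith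
      have "hyp_dist (ball 0 r0 - {complex_of_real r}) 0 z \<le> \<delta> / (2 * L)"
        by (rule caseA[OF assms(1) True gpos g1 d L1 zA])
      then show ?thesis by (simp add: L_def)
    next
      case False
      then have rr: "r < r0" by simp
      have "hyp_dist (ball 0 r0 - {complex_of_real r}) 0 z \<le> \<delta> / (2 * L)"
        by (rule caseB[OF r0' rr assms(2) K_def gpos g2 d LrL Lr z'])
      then show ?thesis by (simp add: L_def)
    qed
  qed
qed


end
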